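(* Let $\theta_1>0$, let $n,d$ be positive integers, let $\epsilon\in(0,\frac12)$, and define for real $\lambda\ge2$ $$M(\lambda)=\theta_1\,\lambda\log_2(\lambda)\,\left(\log_2(3n2^d/\epsilon)\right)^{\frac{1}{\lambda-1}+1}.$$ Then $M$ has exactly one local minimum on $[2,\infty)$, and it is the global minimum of $M$ on $[2,\infty)$. *)

theory Defs
  imports "HOL-Analysis.Analysis"
begin

definition local_min_on :: "(real \<Rightarrow> real) \<Rightarrow> real set \<Rightarrow> real \<Rightarrow> bool" where
  "local_min_on f S x \<longleftrightarrow> x \<in> S \<and> (\<exists>e>0. \<forall>y\<in>S. dist y x < e \<longrightarrow> f x \<le> f y)"

definition Mfun :: "real \<Rightarrow> nat \<Rightarrow> nat \<Rightarrow> real \<Rightarrow> real \<Rightarrow> real" where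
  "Mfun theta1 n d eps lam = theta1 * lam * log 2 lam *
      (log 2 (3 * real n * 2 ^ d / eps)) powr (1 / (lam - 1) + 1)"

end

theory Submission
  imports Defs
begin

lemma Mderiv:
  assumes "L > 0" "x > (1::real)"
  shows "((\<lambda>lam. t*lam*log 2 lam * L powr (1/(lam-1)+1)) has_real_derivative
     t * L powr (1/(x-1)+1) * ((ln x + 1) - x*ln x*ln L/(x-1)^2)/ln 2) (at x)"
proof -
  have "x - 1 \<noteq> 0" using assms by simp
  have e: "(\<lambda>lam. t*lam*log 2 lam * L powr (1/(lam-1)+1)) = (\<lambda>lam. t*lam*(ln lam / ln 2) * exp ((1/(lam-1)+1) * ln L))"
    using assms by (simp add: powr_def log_def)
  have "((\<lambda>lam. t*lam*(ln lam / ln 2) * exp ((1/(lam-1)+1) * ln L)) has_real_derivative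
     t * exp ((1/(x-1)+1) * ln L) * ((ln x + 1) - x*ln x*ln L/(x-1)^2)/ln 2) (at x)"
    apply (rule derivative_eq_intros refl | use assms \<open>x - 1 \<noteq> 0\<close> in simp; fail)+
    using assms \<open>x - 1 \<noteq> 0\<close> apply (simp add: field_simps)
    apply (subgoal_tac "ln 2 + x*(x*ln 2) - x*(2*ln 2) = ln 2 * (x-1)^2")
     apply (simp add: field_simps)
    apply (simp add: power2_eq_square algebra_simps)
    done
  then show ?thesis unfolding e using assms by (simp add: powr_def)
qed
lemma unimodal:
  fixes F :: "real \<Rightarrow> real"
  assumes az: "a \<le> z"
    and dec: "\<And>x y. a \<le> x \<Longrightarrow> x < y \<Longrightarrow> y \<le> z \<Longrightarrow> F y < F x"
    and inc: "\<And>x y. z \<le> x \<Longrightarrow> x < y \<Longrightarrow> F x < F y"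
  shows "(\<exists>!x. local_min_on F {a..} x) \<and> (\<forall>x. local_min_on F {a..} x \<longrightarrow> (\<forall>y\<in>{a..}. F x \<le> F y))"
proof -
  have glob: "F z \<le> F y" if "y \<ge> a" for y
  proof (cases "y < z")
    case True then show ?thesis using dec[of y z] that by simp
  next
    case False
    show ?thesis
    proof (cases "y = z")
      case True then show ?thesis by simp
    next
      case False
      then have "z < y" using \<open>\<not> y < z\<close> by simp
      then show ?thesis using inc[of z y] by simp
    qed
  qed
  have lz: "local_min_on F {a..} z"
    unfolding local_min_on_def
  proof (intro conjI exI[of _ 1])
    show "z \<in> {a..}" using az by simp
    show "(1::real) > 0" by simp
    show "\<forall>y\<in>{a..}. dist y z < 1 \<longrightarrow> F z \<le> F y" using glob by simp
  qed
  have uniq: "x = z" if "local_min_on F {a..} x" for x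
  proof (rule ccontr)
    assume ne: "x \<noteq> z"
    from that obtain e where e1: "e > 0" and e2: "x \<ge> a"
      and e3: "\<forall>y\<in>{a..}. dist y x < e \<longrightarrow> F x \<le> F y"
      unfolding local_min_on_def by auto
    show False
    proof (cases "x < z")
      case True
      define y where "y = min (x + e/2) z"
      have y: "y \<ge> a" "dist y x < e" "x < y" "y \<le> z" using True e1 e2 by (auto simp: y_def dist_real_def)
      have "F x \<le> F y" using e3 y(1,2) by simp
      moreover have "F y < F x" using dec[of x y] e2 y(3,4) by simp
      ultimately show False by simp
    next
      case False
      then have "x > z" using ne by simp
      define y where "y = max (x - e/2) z"
      have y: "y \<ge> a" "dist y x < e" "y < x" "z \<le> y" using \<open>x > z\<close> e1 e2 az by (auto simp: y_def dist_real_def)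
      have "F x \<le> F y" using e3 y(1,2) by simp
      moreover have "F y < F x" using inc[of y x] y(3,4) by simp
      ultimately show False by simp
    qed
  qed
  have "\<exists>!x. local_min_on F {a..} x" using lz uniq by (intro ex1I[of _ z])
  moreover have "\<forall>x. local_min_on F {a..} x \<longrightarrow> (\<forall>y\<in>{a..}. F x \<le> F y)"
    using uniq glob by auto
  ultimately show ?thesis by (rule conjI)
qed

definition qf :: "real \<Rightarrow> real" where "qf x = (x-1)^2/x * (1 + 1/ln x)"

lemma A_mono:
  fixes a b :: real
  assumes "1 \<le> a" "a < b"
  shows "(a-1)^2/a < (b-1)^2/b"
proof -
  have eq: "(b-1)^2/b - (a-1)^2/a = (b-a)*(a*b-1)/(a*b)" using assms
    by (simp add: field_simps power2_eq_square)
  have "a*b \<ge> 1*b" using assms by (intro mult_right_mono) auto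
  then have "a*b > 1" using assms by linarith
  then have "(b-a)*(a*b-1)/(a*b) > 0" using assms by simp
  then show ?thesis using eq by linarith
qed

lemma r_mono:
  fixes a b :: real
  assumes "1 < a" "a \<le> b"
  shows "(a-1)/ln a \<le> (b-1)/ln b"
proof (rule DERIV_nonneg_imp_nondecreasing[OF assms(2)])
  fix x assume x: "a \<le> x" "x \<le> b"
  then have x1: "x > 1" using assms by simp
  then have lnpos: "ln x > 0" by simp
  have "((\<lambda>x. (x-1)/ln x) has_real_derivative (1 * ln x - (x-1) * (1/x)) / (ln x * ln x)) (at x)"
    using x1 lnpos by (auto intro!: derivative_eq_intros)
  moreover have "1 * ln x - (x-1) * (1/x) \<ge> 0"
  proof -
    have "ln (1/x) \<le> 1/x - 1" using x1 by (intro ln_le_minus_one) simp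
    then have "- ln x \<le> 1/x - 1" using x1 by (simp add: ln_div)
    moreover have "(x-1)*(1/x) = 1 - 1/x" using x1 by (simp add: field_simps)
    ultimately show ?thesis by simp
  qed
  ultimately show "\<exists>y. ((\<lambda>x. (x-1)/ln x) has_real_derivative y) (at x) \<and> 0 \<le> y"
    by (intro exI conjI) auto
qed

lemma B_mono:
  fixes a b :: real
  assumes "1 < a" "a \<le> b"
  shows "(a-1)^2/(a*ln a) \<le> (b-1)^2/(b*ln b)"
proof -
  have eq: "(x-1)^2/(x*ln x) = (1 - 1/x) * ((x-1)/ln x)" if "x > 1" for x :: real
    using that by (simp add: field_simps power2_eq_square)
  have "(1 - 1/a) * ((a-1)/ln a) \<le> (1 - 1/b) * ((b-1)/ln b)"
  proof (rule mult_mono)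
    show "1 - 1/a \<le> 1 - 1/b" using assms by (simp add: frac_le)
    show "(a-1)/ln a \<le> (b-1)/ln b" by (rule r_mono[OF assms])
    show "0 \<le> 1 - 1/b" using assms by simp
    show "0 \<le> (a-1)/ln a" using assms by simp
  qed
  then show ?thesis using eq assms by simp
qed

lemma qf_split: "x > 1 \<Longrightarrow> qf x = (x-1)^2/x + (x-1)^2/(x*ln x)"
  unfolding qf_def by (simp add: field_simps)

lemma qf_mono: "1 < a \<Longrightarrow> a < b \<Longrightarrow> qf a < qf b"
  using A_mono[of a b] B_mono[of a b] qf_split[of a] qf_split[of b] by simp

lemma qf_big: "x > 1 \<Longrightarrow> qf x > x - 2"
proof -
  assume x: "x > 1"
  have "(x-1)^2/x > x - 2" using x by (simp add: field_simps power2_eq_square)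
  moreover have "(x-1)^2/(x*ln x) \<ge> 0" using x by simp
  ultimately show ?thesis using qf_split[OF x] by simp
qed

lemma qf_cont: "continuous_on {2..b} qf"
  unfolding qf_def by (intro continuous_intros) auto


theorem mainTheorem9:
  fixes theta1 eps :: real and n d :: nat
  assumes "theta1 > 0" and "n > 0" and "d > 0" and "0 < eps" and "eps < 1/2"
  shows "(\<exists>!x. local_min_on (Mfun theta1 n d eps) {2..} x) \<and>
         (\<forall>x. local_min_on (Mfun theta1 n d eps) {2..} x \<longrightarrow>
              (\<forall>y\<in>{2..}. Mfun theta1 n d eps x \<le> Mfun theta1 n d eps y))"
proof -
  define L where "L = log 2 (3 * real n * 2 ^ d / eps)"
  define c where "c = ln L"
  define p where "p x = qf x - c" for x
  have "(1::real) \<le> 2 ^ d" by simp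
  moreover have "real n \<ge> 1" using assms(2) by simp
  ultimately have "real n * 2 ^ d \<ge> 1" using mult_mono[of 1 "real n" 1 "2^d"] by simp
  then have "3 * real n * 2 ^ d \<ge> (3::real)" by simp
  then have "3 * real n * 2 ^ d / eps > 1" using assms(4,5) by (simp add: field_simps)
  then have Lpos: "L > 0" unfolding L_def by simp
  define M where "M = Mfun theta1 n d eps"
  have Meq: "M = (\<lambda>lam. theta1*lam*log 2 lam * L powr (1/(lam-1)+1))"
    unfolding M_def L_def by (simp add: Mfun_def fun_eq_iff)
  define D where "D x = theta1 * L powr (1/(x-1)+1) * ((ln x + 1) - x*ln x*ln L/(x-1)^2)/ln 2" for x
  have derivM: "(M has_real_derivative D x) (at x)" if "x > 1" for x
    unfolding Meq D_def by (rule Mderiv[OF Lpos that])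
  have contM: "continuous_on {x..y} M" if "x \<ge> 2" for x y
    by (rule continuous_at_imp_continuous_on) (use derivM DERIV_isCont that in force)
  have Dfac: "D x = (theta1 * L powr (1/(x-1)+1) / ln 2 * (x * ln x / (x-1)^2)) * p x" if "x > 1" for x
  proof -
    have k: "(x*ln x/(x-1)^2)*((x-1)^2/x*(1+1/ln x)) = ln x + 1" using that by (simp add: field_simps)
    have "(x*ln x/(x-1)^2) * p x = (ln x + 1) - x*ln x*ln L/(x-1)^2"
      unfolding p_def qf_def c_def right_diff_distrib k by simp
    then have eq: "(ln x + 1) - x*ln x*ln L/(x-1)^2 = (x*ln x/(x-1)^2) * p x" by simp
    have "D x = theta1 * L powr (1/(x-1)+1) / ln 2 * ((ln x + 1) - x*ln x*ln L/(x-1)^2)"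
      unfolding D_def by simp
    also have "\<dots> = theta1 * L powr (1/(x-1)+1) / ln 2 * ((x*ln x/(x-1)^2) * p x)"
      by (simp only: eq)
    finally show ?thesis by (simp only: mult.assoc)
  qed
  have fpos: "theta1 * L powr (1/(x-1)+1) / ln 2 * (x * ln x / (x-1)^2) > 0" if "x > 1" for x
    using that Lpos assms(1) by simp
  have Dneg: "D x < 0" if "x > 1" "p x < 0" for x
    unfolding Dfac[OF that(1)] using fpos[OF that(1)] that(2) by (rule mult_pos_neg)
  have Dpos: "D x > 0" if "x > 1" "p x > 0" for x
    unfolding Dfac[OF that(1)] using fpos[OF that(1)] that(2) by (rule mult_pos_pos)
  have pmono: "p a < p b" if "1 < a" "a < b" for a b
    using qf_mono[OF that] unfolding p_def by simp
  obtain z where z: "z \<ge> 2" "\<And>y. 2 \<le> y \<Longrightarrow> y < z \<Longrightarrow> p y < 0" "\<And>y. z < y \<Longrightarrow> p y > 0"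
  proof (cases "p 2 \<ge> 0")
    case True
    show ?thesis by (rule that[of 2]) (use True pmono[of 2] in \<open>auto intro: le_less_trans\<close>)
  next
    case False
    define b where "b = max 2 (\<bar>c\<bar> + 3)"
    have q1: "qf b > b - 2" by (rule qf_big) (simp add: b_def)
    have q2: "b - 2 \<ge> \<bar>c\<bar> + 1" by (simp add: b_def)
    have "p b > 0" unfolding p_def using q1 q2 abs_ge_self[of c] by linarith
    moreover have "2 \<le> b" by (simp add: b_def)
    ultimately obtain z where "z \<ge> 2" "z \<le> b" "p z = 0"
    proof -
      have "continuous_on {2..b} p" unfolding p_def
        by (intro continuous_on_diff qf_cont continuous_on_const)
      then show ?thesis using IVT'[of p 2 0 b] False \<open>p b > 0\<close> \<open>2 \<le> b\<close> that by auto
    qed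
    then show ?thesis
    proof (intro that[of z])
      fix y assume "2 \<le> y" "y < z"
      then show "p y < 0" using pmono[of y z] \<open>p z = 0\<close> by simp
    next
      fix y assume "z < y"
      then show "p y > 0" using pmono[of z y] \<open>p z = 0\<close> \<open>z \<ge> 2\<close> by simp
    qed
  qed
  have dec: "M y < M x" if "2 \<le> x" "x < y" "y \<le> z" for x y
  proof (rule DERIV_neg_imp_decreasing_open[OF that(2) _ contM[OF that(1)]])
    fix t assume t: "x < t" "t < y"
    then have "t > 1" "p t < 0" using that z(2)[of t] by auto
    then show "\<exists>r. (M has_real_derivative r) (at t) \<and> r < 0" using derivM Dneg by blast
  qed
  have inc: "M x < M y" if "z \<le> x" "x < y" for x y
  proof (rule DERIV_pos_imp_increasing_open[OF that(2) _ contM])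
    fix t assume t: "x < t" "t < y"
    then have "t > 1" "p t > 0" using that z(1) z(3)[of t] by auto
    then show "\<exists>r. (M has_real_derivative r) (at t) \<and> r > 0" using derivM Dpos by blast
  next
    show "2 \<le> x" using that z(1) by simp
  qed
  have "(\<exists>!x. local_min_on M {2..} x) \<and> (\<forall>x. local_min_on M {2..} x \<longrightarrow> (\<forall>y\<in>{2..}. M x \<le> M y))"
    by (rule unimodal[of 2 z M]) (use z(1) dec inc in auto)
  then show ?thesis unfolding M_def .
qed

end
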